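(* Let $N_\mathrm{T},N_\mathrm{R},G,L$ be positive integers, $N_\mathrm{S}=GL$, $\mathbf{H}_\mathrm{D}\in\mathbb{C}^{N_\mathrm{R}\times N_\mathrm{T}}$, $\mathbf{H}_\mathrm{B}\in\mathbb{C}^{N_\mathrm{R}\times N_\mathrm{S}}$, $\mathbf{H}_\mathrm{F}\in\mathbb{C}^{N_\mathrm{S}\times N_\mathrm{T}}$, with blocks $\mathbf{H}_{\mathrm{B},g}$ (columns $(g-1)L+1,\ldots,gL$ of $\mathbf{H}_\mathrm{B}$) and $\mathbf{H}_{\mathrm{F},g}$ (rows $(g-1)L+1,\ldots,gL$ of $\mathbf{H}_\mathrm{F}$). Consider the problem of maximizing $\phi(\mathbf{\Theta})=\lVert\mathbf{H}_\mathrm{D}+\mathbf{H}_\mathrm{B}\mathbf{\Theta}\mathbf{H}_\mathrm{F}\rVert_\mathrm{F}^2$ over $\mathbf{\Theta}=\mathrm{diag}(\mathbf{\Theta}_1,\ldots,\mathbf{\Theta}_G)$ subject to $\mathbf{\Theta}_g^\mathsf{H}\mathbf{\Theta}_g=\mathbf{I}$ for all $g$. Starting from any feasible $\mathbf{\Theta}^{(0)}$, for $r=0,1,2,\ldots$ and $g=1,\ldots,G$ in turn, set $$\mathbf{M}_g^{(r)}=\mathbf{H}_{\mathrm{B},g}^\mathsf{H}\Bigl(\mathbf{H}_\mathrm{D}+\mathbf{H}_\mathrm{B}\,\mathrm{diag}\bigl(\mathbf{\Theta}_1^{(r+1)},\ldots,\mathbf{\Theta}_{g-1}^{(r+1)},\mathbf{\Theta}_g^{(r)},\ldots,\mathbf{\Theta}_G^{(r)}\bigr)\mathbf{H}_\mathrm{F}\Bigr)\mathbf{H}_{\mathrm{F},g}^\mathsf{H},$$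 and $\mathbf{\Theta}_g^{(r+1)}=\mathbf{U}_g^{(r)}\mathbf{V}_g^{(r)\mathsf{H}}$, where $\mathbf{U}_g^{(r)},\mathbf{V}_g^{(r)}$ are any left and right singular matrices of $\mathbf{M}_g^{(r)}$ (so that $\mathbf{\Theta}_g^{(r+1)}=\arg\min_{\mathbf{X}_g\in\mathbb{U}^{L\times L}}\lVert\mathbf{M}_g^{(r)}-\mathbf{X}_g\rVert_\mathrm{F}$). Then the objective $\phi$ is monotonically non-decreasing along the iterations (and the sequence of objective values converges). Moreover, when the matrices $\mathbf{M}_g^{(r)}$ converge, the limiting solution $\mathbf{\Theta}'$ is a stationary point of the problem, i.e., for every $g$ there is a matrix $\mathbf{\Lambda}_g$ with $\mathbf{H}_{\mathrm{B},g}^\mathsf{H}(\mathbf{H}_\mathrm{D}+\mathbf{H}_\mathrm{B}\mathbf{\Theta}'\mathbf{H}_\mathrm{F})\mathbf{H}_{\mathrm{F},g}^\mathsf{H}-\mathbf{\Theta}'_g\mathbf{\Lambda}_g^\mathsf{H}=\mathbf{0}$ (the KKT stationarity condition), so the objective converges towards its value at a stationary point.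
   Context: $\mathbb{U}^{L\times L}$ is the set of $L\times L$ complex unitary matrices; $\mathrm{diag}(\cdot)$ builds a block-diagonal matrix; $\lVert\cdot\rVert_\mathrm{F}$ is the Frobenius norm. *)

theory Defs
  imports "HOL-Analysis.Analysis" "Jordan_Normal_Form.Matrix"
begin

text \<open>Complex matrices are Jordan_Normal_Form matrices of type complex mat with
explicit dimensions.  Block indices g range over 0..G-1 (0-based).\<close>

definition ctrans :: "complex mat \<Rightarrow> complex mat" where
  "ctrans A = mat (dim_col A) (dim_row A) (\<lambda>(i,j). cnj (A $$ (j,i)))"

definition unitary_mat :: "nat \<Rightarrow> complex mat \<Rightarrow> bool" where
  "unitary_mat L X \<longleftrightarrow> X \<in> carrier_mat L L \<and> ctrans X * X = 1\<^sub>m L"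

definition frob2 :: "complex mat \<Rightarrow> real" where
  "frob2 A = (\<Sum>i<dim_row A. \<Sum>j<dim_col A. (cmod (A $$ (i,j)))\<^sup>2)"

definition col_block :: "nat \<Rightarrow> complex mat \<Rightarrow> nat \<Rightarrow> complex mat" where
  "col_block L HB g = mat (dim_row HB) L (\<lambda>(i,j). HB $$ (i, g * L + j))"

definition row_block :: "nat \<Rightarrow> complex mat \<Rightarrow> nat \<Rightarrow> complex mat" where
  "row_block L HF g = mat L (dim_col HF) (\<lambda>(i,j). HF $$ (g * L + i, j))"

definition blkdiag :: "nat \<Rightarrow> nat \<Rightarrow> (nat \<Rightarrow> complex mat) \<Rightarrow> complex mat" where
  "blkdiag G L Th = mat (G * L) (G * L)
     (\<lambda>(i,j). if i div L = j div L then Th (i div L) $$ (i mod L, j mod L) else 0)"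

definition obj :: "complex mat \<Rightarrow> complex mat \<Rightarrow> complex mat \<Rightarrow> complex mat \<Rightarrow> real" where
  "obj HD HB HF Th = frob2 (HD + HB * Th * HF)"

definition is_svd :: "nat \<Rightarrow> complex mat \<Rightarrow> complex mat \<Rightarrow> complex mat \<Rightarrow> complex mat \<Rightarrow> bool" where
  "is_svd L M U S V \<longleftrightarrow> unitary_mat L U \<and> unitary_mat L V \<and> S \<in> carrier_mat L L \<and>
     (\<forall>i<L. \<forall>j<L. i \<noteq> j \<longrightarrow> S $$ (i,j) = 0) \<and>
     (\<forall>i<L. S $$ (i,i) \<in> \<real> \<and> Re (S $$ (i,i)) \<ge> 0) \<and>
     M = U * S * ctrans V"

definition mat_tendsto :: "(nat \<Rightarrow> complex mat) \<Rightarrow> complex mat \<Rightarrow> bool" where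
  "mat_tendsto X A \<longleftrightarrow> (\<forall>r. X r \<in> carrier_mat (dim_row A) (dim_col A)) \<and>
     (\<forall>i<dim_row A. \<forall>j<dim_col A. (\<lambda>r. X r $$ (i,j)) \<longlonglongrightarrow> A $$ (i,j))"

end

theory Submission
  imports Defs "Jordan_Normal_Form.Determinant"
begin

lemma ctrans_dim[simp]: "dim_row (ctrans A) = dim_col A" "dim_col (ctrans A) = dim_row A"
  by (simp_all add: ctrans_def)

lemma ctrans_carrier[simp]: "A \<in> carrier_mat n m \<Longrightarrow> ctrans A \<in> carrier_mat m n"
  by (rule carrier_matI) (auto dest: carrier_matD)

lemma ctrans_index[simp]: "i < dim_col A \<Longrightarrow> j < dim_row A \<Longrightarrow> ctrans A $$ (i,j) = cnj (A $$ (j,i))"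
  by (simp add: ctrans_def)

lemma mult_entry: "i < dim_row A \<Longrightarrow> j < dim_col B \<Longrightarrow> dim_col A = dim_row B \<Longrightarrow>
  (A * B) $$ (i,j) = (\<Sum>k<dim_row B. A $$ (i,k) * B $$ (k,j))"
  by (simp add: scalar_prod_def atLeast0LessThan)

lemma ctrans_mult: assumes "A \<in> carrier_mat n p" "B \<in> carrier_mat p m"
  shows "ctrans (A * B) = ctrans B * ctrans A"
proof -
  have d: "dim_row A = n" "dim_col A = p" "dim_row B = p" "dim_col B = m" using assms by auto
  show ?thesis
  proof (rule eq_matI)
    fix i j assume i: "i < dim_row (ctrans B * ctrans A)" and j: "j < dim_col (ctrans B * ctrans A)"
    hence i': "i < m" and j': "j < n" using d by auto
    have "ctrans (A * B) $$ (i,j) = cnj ((A * B) $$ (j,i))" using i' j' d by simp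
    also have "(A * B) $$ (j,i) = (\<Sum>k<p. A $$ (j,k) * B $$ (k,i))"
      by (rule trans[OF mult_entry]) (use i' j' d in auto)
    also have "(ctrans B * ctrans A) $$ (i,j) = (\<Sum>k<p. ctrans B $$ (i,k) * ctrans A $$ (k,j))"
      by (rule trans[OF mult_entry]) (use i' j' d in auto)
    ultimately show "ctrans (A * B) $$ (i,j) = (ctrans B * ctrans A) $$ (i,j)"
      using i' j' d by (simp add: mult.commute)
  qed (use d in auto)
qed

lemma ctrans_ctrans[simp]: "ctrans (ctrans A) = A"
  by (intro eq_matI) auto

lemma ctrans_one[simp]: "ctrans (1\<^sub>m n) = 1\<^sub>m n"
  by (intro eq_matI) auto

definition minner :: "complex mat \<Rightarrow> complex mat \<Rightarrow> complex" where
  "minner A B = (\<Sum>i<dim_row A. \<Sum>j<dim_col A. A $$ (i,j) * cnj (B $$ (i,j)))"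

lemma minner_left: assumes A: "A \<in> carrier_mat n p" and D: "D \<in> carrier_mat p q" and P: "P \<in> carrier_mat n q"
  shows "minner (A * D) P = minner D (ctrans A * P)"
proof -
  have "minner (A * D) P = (\<Sum>i<n. \<Sum>j<q. \<Sum>k<p. A $$ (i,k) * D $$ (k,j) * cnj (P $$ (i,j)))"
    using A D by (simp add: minner_def mult_entry sum_distrib_right del: index_mult_mat(1))
  also have "\<dots> = (\<Sum>i<n. \<Sum>k<p. \<Sum>j<q. A $$ (i,k) * D $$ (k,j) * cnj (P $$ (i,j)))"
    by (rule sum.cong[OF refl], rule sum.swap)
  also have "\<dots> = (\<Sum>k<p. \<Sum>i<n. \<Sum>j<q. A $$ (i,k) * D $$ (k,j) * cnj (P $$ (i,j)))"
    by (rule sum.swap)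
  also have "\<dots> = (\<Sum>k<p. \<Sum>j<q. \<Sum>i<n. A $$ (i,k) * D $$ (k,j) * cnj (P $$ (i,j)))"
    by (rule sum.cong[OF refl], rule sum.swap)
  also have "\<dots> = minner D (ctrans A * P)"
    using A D P by (simp add: minner_def mult_entry sum_distrib_left mult_ac del: index_mult_mat(1))
  finally show ?thesis .
qed

lemma minner_right: assumes D: "D \<in> carrier_mat n p" and F: "F \<in> carrier_mat p q" and P: "P \<in> carrier_mat n q"
  shows "minner (D * F) P = minner D (P * ctrans F)"
proof -
  have "minner (D * F) P = (\<Sum>i<n. \<Sum>j<q. \<Sum>k<p. D $$ (i,k) * F $$ (k,j) * cnj (P $$ (i,j)))"
    using F D by (simp add: minner_def mult_entry sum_distrib_right del: index_mult_mat(1))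
  also have "\<dots> = (\<Sum>i<n. \<Sum>k<p. \<Sum>j<q. D $$ (i,k) * F $$ (k,j) * cnj (P $$ (i,j)))"
    by (subst sum.swap) (rule refl)
  also have "\<dots> = minner D (P * ctrans F)"
    using F D P by (simp add: minner_def mult_entry sum_distrib_left mult_ac del: index_mult_mat(1))
  finally show ?thesis .
qed

lemma cmod_add_sq: "(cmod (a + b))\<^sup>2 = (cmod a)\<^sup>2 + (cmod b)\<^sup>2 + 2 * Re (b * cnj a)"
  unfolding cmod_power2 by (simp add: power2_eq_square algebra_simps)

lemma frob2_add: assumes "A \<in> carrier_mat n m" "B \<in> carrier_mat n m"
  shows "frob2 (A + B) = frob2 A + frob2 B + 2 * Re (minner B A)"
  using assms by (simp add: frob2_def minner_def cmod_add_sq sum.distrib sum_distrib_left)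

lemma frob2_nonneg: "frob2 A \<ge> 0"
  by (simp add: frob2_def sum_nonneg)

lemma minner_cnj: assumes "A \<in> carrier_mat n m" "B \<in> carrier_mat n m"
  shows "minner A B = cnj (minner B A)"
  using assms by (simp add: minner_def cnj_sum mult.commute)

lemma minner_diff: assumes "A \<in> carrier_mat n m" "B \<in> carrier_mat n m"
  shows "minner (A - B) P = minner A P - minner B P"
  using assms by (simp add: minner_def sum_subtractf algebra_simps)

lemma unitary_right: "unitary_mat L X \<Longrightarrow> X * ctrans X = 1\<^sub>m L"
proof -
  assume "unitary_mat L X"
  hence "X \<in> carrier_mat L L" "ctrans X * X = 1\<^sub>m L" by (auto simp: unitary_mat_def)
  thus ?thesis using mat_mult_left_right_inverse[of "ctrans X" L X] by simp
qed

lemma unitary_mult: assumes "unitary_mat L U" "unitary_mat L V"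
  shows "unitary_mat L (U * ctrans V)"
proof -
  have U: "U \<in> carrier_mat L L" and V: "V \<in> carrier_mat L L" and u: "ctrans U * U = 1\<^sub>m L"
    and v: "V * ctrans V = 1\<^sub>m L"
    using assms unitary_right[OF assms(2)] by (auto simp: unitary_mat_def)
  have "ctrans (U * ctrans V) * (U * ctrans V) = (V * ctrans U) * (U * ctrans V)"
    using U V by (simp add: ctrans_mult[OF U ctrans_carrier[OF V]])
  also have "\<dots> = V * (ctrans U * (U * ctrans V))"
    using U V by (meson assoc_mult_mat ctrans_carrier mult_carrier_mat)
  also have "ctrans U * (U * ctrans V) = (ctrans U * U) * ctrans V"
    using U V by (metis assoc_mult_mat ctrans_carrier)
  also have "\<dots> = ctrans V" using u V by simp
  also have "V * ctrans V = 1\<^sub>m L" using v .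
  finally show ?thesis using U V by (simp add: unitary_mat_def)
qed

lemma unitary_entry: assumes "unitary_mat L X" "i < L" "j < L"
  shows "cmod (X $$ (i,j)) \<le> 1"
proof -
  have X: "X \<in> carrier_mat L L" and e: "ctrans X * X = 1\<^sub>m L" using assms by (auto simp: unitary_mat_def)
  have "(ctrans X * X) $$ (j,j) = 1" using e assms by simp
  hence "(\<Sum>k<L. cnj (X $$ (k,j)) * X $$ (k,j)) = 1"
    using X assms by (simp add: mult_entry del: index_mult_mat(1))
  moreover have "cnj z * z = complex_of_real ((cmod z)\<^sup>2)" for z
    by (metis complex_norm_square mult.commute)
  ultimately have "(\<Sum>k<L. complex_of_real ((cmod (X $$ (k,j)))\<^sup>2)) = 1"
    by simp
  hence s: "(\<Sum>k<L. (cmod (X $$ (k,j)))\<^sup>2) = 1"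
    by (metis of_real_eq_1_iff of_real_sum)
  have "(cmod (X $$ (i,j)))\<^sup>2 \<le> (\<Sum>k<L. (cmod (X $$ (k,j)))\<^sup>2)"
    by (rule member_le_sum) (use assms in auto)
  with s have "(cmod (X $$ (i,j)))\<^sup>2 \<le> 1\<^sup>2" by simp
  thus ?thesis by (rule power2_le_imp_le) simp
qed

lemma unitary_ctrans: "unitary_mat L U \<Longrightarrow> unitary_mat L (ctrans U)"
  using unitary_right[of L U] by (auto simp: unitary_mat_def)

lemma unitary_carrier: "unitary_mat L U \<Longrightarrow> U \<in> carrier_mat L L"
  by (simp add: unitary_mat_def)

lemma minner_diag: assumes S: "S \<in> carrier_mat L L" and d: "\<forall>i<L. \<forall>j<L. i \<noteq> j \<longrightarrow> S $$ (i,j) = 0"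
  shows "minner S W = (\<Sum>i<L. S $$ (i,i) * cnj (W $$ (i,i)))"
proof -
  have *: "(\<Sum>j<L. S $$ (i,j) * cnj (W $$ (i,j))) = S $$ (i,i) * cnj (W $$ (i,i))" if i: "i < L" for i
  proof -
    have "(\<Sum>j<L. S $$ (i,j) * cnj (W $$ (i,j))) = (\<Sum>j<L. if j = i then S $$ (i,i) * cnj (W $$ (i,i)) else 0)"
      by (rule sum.cong) (use d i in auto)
    also have "\<dots> = S $$ (i,i) * cnj (W $$ (i,i))" using i by (simp add: sum.delta)
    finally show ?thesis .
  qed
  show ?thesis unfolding minner_def using S * by simp
qed

lemma svd_opt: assumes svd: "is_svd L M U S V" and X0: "unitary_mat L X0"
  shows "Re (minner X0 M) \<le> Re (minner (U * ctrans V) M)"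
proof -
  have U: "U \<in> carrier_mat L L" and V: "V \<in> carrier_mat L L" and S: "S \<in> carrier_mat L L"
    and d: "\<forall>i<L. \<forall>j<L. i \<noteq> j \<longrightarrow> S $$ (i,j) = 0"
    and r: "\<forall>i<L. S $$ (i,i) \<in> \<real> \<and> Re (S $$ (i,i)) \<ge> 0"
    and M: "M = U * S * ctrans V"
    and uU: "unitary_mat L U" and uV: "unitary_mat L V"
    using svd by (auto simp: is_svd_def unitary_mat_def)
  have Mc: "M \<in> carrier_mat L L" using M U S V by auto
  have gen: "minner M Y = minner S (ctrans U * Y * V)" if Y: "Y \<in> carrier_mat L L" for Y
  proof -
    have "M = U * (S * ctrans V)" using M U S V by (metis assoc_mult_mat ctrans_carrier)
    hence "minner M Y = minner (S * ctrans V) (ctrans U * Y)"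
      using minner_left[OF U _ Y, of "S * ctrans V"] S V by auto
    also have "\<dots> = minner S (ctrans U * Y * V)"
      using minner_right[OF S ctrans_carrier[OF V] mult_carrier_mat[OF ctrans_carrier[OF U] Y]] by simp
    finally show ?thesis .
  qed
  have ReS: "Re (minner S W) = (\<Sum>i<L. Re (S $$ (i,i)) * Re (W $$ (i,i)))" for W
  proof -
    have "Re (minner S W) = (\<Sum>i<L. Re (S $$ (i,i) * cnj (W $$ (i,i))))"
      by (simp add: minner_diag[OF S d])
    also have "\<dots> = (\<Sum>i<L. Re (S $$ (i,i)) * Re (W $$ (i,i)))"
    proof (rule sum.cong[OF refl])
      fix i assume "i \<in> {..<L}"
      hence "S $$ (i,i) \<in> \<real>" using r by auto
      then obtain s where "S $$ (i,i) = of_real s" by (auto elim: Reals_cases)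
      thus "Re (S $$ (i,i) * cnj (W $$ (i,i))) = Re (S $$ (i,i)) * Re (W $$ (i,i))" by simp
    qed
    finally show ?thesis .
  qed
  have X0c: "X0 \<in> carrier_mat L L" using X0 by (simp add: unitary_mat_def)
  define W where "W = ctrans U * X0 * V"
  have uW: "unitary_mat L W"
  proof -
    have "unitary_mat L (ctrans U * ctrans (ctrans X0))"
      by (rule unitary_mult[OF unitary_ctrans[OF uU] unitary_ctrans[OF X0]])
    hence "unitary_mat L (ctrans U * X0 * ctrans (ctrans V))"
      by (intro unitary_mult[OF _ unitary_ctrans[OF uV]]) simp
    thus ?thesis by (simp add: W_def)
  qed
  have XV: "U * ctrans V \<in> carrier_mat L L" using U V by auto
  have one: "ctrans U * (U * ctrans V) * V = 1\<^sub>m L"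
  proof -
    have "ctrans U * (U * ctrans V) = (ctrans U * U) * ctrans V"
      using assoc_mult_mat[OF ctrans_carrier[OF U] U ctrans_carrier[OF V]] by simp
    also have "\<dots> = ctrans V" using uU V by (simp add: unitary_mat_def)
    finally show ?thesis using uV by (simp add: unitary_mat_def)
  qed
  have "Re (minner X0 M) = Re (minner M X0)" using minner_cnj[OF X0c Mc] by simp
  also have "\<dots> = (\<Sum>i<L. Re (S $$ (i,i)) * Re (W $$ (i,i)))"
    using gen[OF X0c] ReS W_def by simp
  also have "\<dots> \<le> (\<Sum>i<L. Re (S $$ (i,i)))"
  proof (rule sum_mono)
    fix i assume i: "i \<in> {..<L}"
    have "Re (W $$ (i,i)) \<le> 1"
      using unitary_entry[OF uW, of i i] i complex_Re_le_cmod[of "W $$ (i,i)"] by auto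
    thus "Re (S $$ (i,i)) * Re (W $$ (i,i)) \<le> Re (S $$ (i,i))"
      using r i by (metis mult_left_mono mult.right_neutral lessThan_iff)
  qed
  also have "\<dots> = Re (minner M (U * ctrans V))"
    using gen[OF XV] ReS[of "1\<^sub>m L"] one by simp
  also have "\<dots> = Re (minner (U * ctrans V) M)" using minner_cnj[OF XV Mc] by simp
  finally show ?thesis .
qed

definition embed :: "nat \<Rightarrow> nat \<Rightarrow> nat \<Rightarrow> complex mat \<Rightarrow> complex mat" where
  "embed G L g D = mat (G * L) (G * L)
     (\<lambda>(i,j). if i div L = g \<and> j div L = g then D $$ (i mod L, j mod L) else 0)"

lemma blkdiag_carrier[simp]: "blkdiag G L T \<in> carrier_mat (G*L) (G*L)"
  by (simp add: blkdiag_def)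
lemma embed_carrier[simp]: "embed G L g D \<in> carrier_mat (G*L) (G*L)"
  by (simp add: embed_def)
lemma col_block_carrier[simp]: "col_block L HB g \<in> carrier_mat (dim_row HB) L"
  by (simp add: col_block_def)
lemma row_block_carrier[simp]: "row_block L HF g \<in> carrier_mat L (dim_col HF)"
  by (simp add: row_block_def)

lemma blkdiag_cong: assumes "\<forall>k<G. T k = T' k" shows "blkdiag G L T = blkdiag G L T'"
proof -
  have "i < G * L \<Longrightarrow> i div L < G" for i by (simp add: less_mult_imp_div_less)
  thus ?thesis using assms unfolding blkdiag_def by (intro eq_matI) auto
qed

lemma sum_block: fixes g G L :: nat assumes g: "g < G"
  shows "(\<Sum>a<G*L. if a div L = g then f a else 0) = (\<Sum>r<L. f (g*L + r))"
proof -
  let ?B = "(\<lambda>r. g*L + r) ` {..<L}"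
  have sub: "?B \<subseteq> {..<G*L}"
  proof
    fix x assume "x \<in> ?B"
    then obtain r where r: "r < L" "x = g*L + r" by auto
    have "g*L + r < g*L + L" using r(1) by linarith
    also have "\<dots> = Suc g * L" by simp
    also have "\<dots> \<le> G * L" using g by (intro mult_right_mono) auto
    finally show "x \<in> {..<G*L}" using r by simp
  qed
  have "(\<Sum>a<G*L. if a div L = g then f a else 0) = (\<Sum>a\<in>?B. if a div L = g then f a else 0)"
  proof (rule sum.mono_neutral_right[OF _ sub])
    show "\<forall>x\<in>{..<G*L} - ?B. (if x div L = g then f x else 0) = 0"
    proof
      fix x assume x: "x \<in> {..<G*L} - ?B"
      show "(if x div L = g then f x else 0) = 0"
      proof (cases "x div L = g")
        case True
        have "L > 0" using x by (cases "L = 0") auto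
        hence "x = g*L + x mod L" "x mod L < L" using True div_mult_mod_eq[of x L] by (auto simp: mult.commute)
        hence "x \<in> ?B" by blast
        thus ?thesis using x by auto
      qed simp
    qed
  qed simp
  also have "\<dots> = (\<Sum>r<L. if (g*L + r) div L = g then f (g*L+r) else 0)"
    by (subst sum.reindex) (auto simp: inj_on_def)
  also have "\<dots> = (\<Sum>r<L. f (g*L + r))"
  proof (rule sum.cong[OF refl])
    fix r assume r: "r \<in> {..<L}"
    hence "L \<noteq> 0" by auto
    hence "(g*L + r) div L = g + r div L" by (metis add.commute div_mult_self1)
    also have "r div L = 0" using r by simp
    finally show "(if (g*L + r) div L = g then f (g*L+r) else 0) = f (g*L + r)" by simp
  qed
  finally show ?thesis .
qed

lemma embed_mult: assumes g: "g < G" and D: "D \<in> carrier_mat L L"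
  and HB: "HB \<in> carrier_mat NR (G*L)" and HF: "HF \<in> carrier_mat (G*L) NT"
  shows "HB * embed G L g D * HF = col_block L HB g * D * row_block L HF g"
proof (rule eq_matI)
  fix i j assume i: "i < dim_row (col_block L HB g * D * row_block L HF g)"
    and j: "j < dim_col (col_block L HB g * D * row_block L HF g)"
  have iN: "i < NR" and jN: "j < NT" using i j HB HF by (auto simp: col_block_def row_block_def)
  have e1: "(HB * embed G L g D) $$ (i,b) =
     (if b div L = g then (\<Sum>r<L. HB $$ (i, g*L+r) * D $$ (r, b mod L)) else 0)" if b: "b < G*L" for b
  proof -
    have "(HB * embed G L g D) $$ (i,b) = (\<Sum>a<G*L. if a div L = g then
            HB $$ (i,a) * (if b div L = g then D $$ (a mod L, b mod L) else 0) else 0)"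
      using HB iN b by (simp add: mult_entry embed_def del: index_mult_mat(1)) (intro sum.cong, auto)
    also have "\<dots> = (\<Sum>r<L. HB $$ (i,g*L+r) * (if b div L = g then D $$ ((g*L+r) mod L, b mod L) else 0))"
      by (rule sum_block[OF g])
    also have "\<dots> = (if b div L = g then (\<Sum>r<L. HB $$ (i, g*L+r) * D $$ (r, b mod L)) else 0)"
      by (auto intro: sum.cong)
    finally show ?thesis .
  qed
  have "(HB * embed G L g D * HF) $$ (i,j) = (\<Sum>b<G*L. (HB * embed G L g D) $$ (i,b) * HF $$ (b,j))"
    by (rule trans[OF mult_entry]) (use HB HF iN jN in \<open>auto simp: embed_def\<close>)
  also have "\<dots> = (\<Sum>b<G*L. if b div L = g then (\<Sum>r<L. HB $$ (i, g*L+r) * D $$ (r, b mod L)) * HF $$ (b,j) else 0)"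
    by (rule sum.cong) (auto simp: e1)
  also have "\<dots> = (\<Sum>s<L. (\<Sum>r<L. HB $$ (i, g*L+r) * D $$ (r, (g*L+s) mod L)) * HF $$ (g*L+s,j))"
    by (rule sum_block[OF g])
  also have "\<dots> = (col_block L HB g * D * row_block L HF g) $$ (i,j)"
  proof -
    have cb: "(col_block L HB g * D) $$ (i,s) = (\<Sum>r<L. HB $$ (i, g*L+r) * D $$ (r, s))" if s: "s < L" for s
      by (rule trans[OF mult_entry]) (use HB iN D s in \<open>auto simp: col_block_def\<close>)
    have "(col_block L HB g * D * row_block L HF g) $$ (i,j) =
        (\<Sum>s<L. (col_block L HB g * D) $$ (i,s) * row_block L HF g $$ (s,j))"
      by (rule trans[OF mult_entry]) (use HB HF iN jN D in \<open>auto simp: col_block_def row_block_def\<close>)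
    also have "\<dots> = (\<Sum>s<L. (\<Sum>r<L. HB $$ (i, g*L+r) * D $$ (r, (g*L+s) mod L)) * HF $$ (g*L+s,j))"
      by (rule sum.cong) (use HF jN in \<open>auto simp: cb row_block_def\<close>)
    finally show ?thesis by simp
  qed
  finally show "(HB * embed G L g D * HF) $$ (i,j) = (col_block L HB g * D * row_block L HF g) $$ (i,j)" .
qed (use HB HF in \<open>auto simp: col_block_def row_block_def\<close>)

lemma blk_step: assumes g: "g < G" and T: "\<forall>k. k \<noteq> g \<longrightarrow> T' k = T k"
  and c1: "T' g \<in> carrier_mat L L" and c2: "T g \<in> carrier_mat L L"
  shows "blkdiag G L T' - blkdiag G L T = embed G L g (T' g - T g)"
proof (rule eq_matI)
  fix i j assume i: "i < dim_row (embed G L g (T' g - T g))" and j: "j < dim_col (embed G L g (T' g - T g))"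
  hence iG: "i < G*L" and jG: "j < G*L" by (auto simp: embed_def)
  hence L: "L > 0" by (cases "L = 0") auto
  hence "i mod L < L" "j mod L < L" by auto
  thus "(blkdiag G L T' - blkdiag G L T) $$ (i,j) = embed G L g (T' g - T g) $$ (i,j)"
    using iG jG T c1 c2 by (auto simp: blkdiag_def embed_def)
qed (auto simp: embed_def blkdiag_def)

lemma step_mono: assumes P: "P \<in> carrier_mat n m" and B: "B \<in> carrier_mat n L" and F: "F \<in> carrier_mat L m"
  and X0: "unitary_mat L X0" and svd: "is_svd L (ctrans B * P * ctrans F) U S V"
  shows "frob2 P \<le> frob2 (P + B * (U * ctrans V - X0) * F)"
proof -
  have U: "U \<in> carrier_mat L L" and V: "V \<in> carrier_mat L L" using svd by (auto simp: is_svd_def unitary_mat_def)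
  have X0c: "X0 \<in> carrier_mat L L" using X0 by (simp add: unitary_mat_def)
  have Xc: "U * ctrans V \<in> carrier_mat L L" using U V by auto
  define D where "D = U * ctrans V - X0"
  define M where "M = ctrans B * P * ctrans F"
  have Dc: "D \<in> carrier_mat L L" using Xc X0c by (simp add: D_def minus_carrier_mat)
  have BD: "B * D \<in> carrier_mat n L" using B Dc by auto
  have Q: "B * D * F \<in> carrier_mat n m" using BD F by auto
  have "minner (B * D * F) P = minner (B * D) (P * ctrans F)"
    by (rule minner_right[OF BD F P])
  also have "\<dots> = minner D (ctrans B * (P * ctrans F))"
    by (rule minner_left[OF B Dc]) (use P F in auto)
  also have "ctrans B * (P * ctrans F) = M"
    unfolding M_def using B P F by (metis assoc_mult_mat ctrans_carrier)
  also have "minner D M = minner (U * ctrans V) M - minner X0 M"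
    unfolding D_def by (rule minner_diff[OF Xc X0c])
  finally have eq: "minner (B * D * F) P = minner (U * ctrans V) M - minner X0 M" .
  have "Re (minner X0 M) \<le> Re (minner (U * ctrans V) M)"
    using svd_opt[OF svd[folded M_def] X0] .
  hence "0 \<le> Re (minner (B * D * F) P)" using eq by simp
  hence "frob2 P \<le> frob2 P + frob2 (B * D * F) + 2 * Re (minner (B * D * F) P)"
    using frob2_nonneg[of "B * D * F"] by linarith
  also have "\<dots> = frob2 (P + B * D * F)" using frob2_add[OF P Q] by simp
  finally show ?thesis by (simp add: D_def)
qed

lemma blkdiag_entry: assumes "\<forall>k<G. unitary_mat L (T k)" "a < G*L" "b < G*L"
  shows "cmod (blkdiag G L T $$ (a,b)) \<le> 1"
proof -
  have L: "L > 0" using assms by (cases "L = 0") auto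
  have "a div L < G" using assms(2) by (simp add: less_mult_imp_div_less)
  moreover have "a mod L < L" "b mod L < L" using L by auto
  ultimately show ?thesis using assms unitary_entry[of L "T (a div L)" "a mod L" "b mod L"]
    by (auto simp: blkdiag_def)
qed

definition bnd :: "complex mat \<Rightarrow> complex mat \<Rightarrow> complex mat \<Rightarrow> real" where
  "bnd HD HB HF = (\<Sum>i<dim_row HD. \<Sum>j<dim_col HD. (cmod (HD $$ (i,j)) +
     (\<Sum>b<dim_row HF. \<Sum>a<dim_col HB. cmod (HB $$ (i,a)) * cmod (HF $$ (b,j))))\<^sup>2)"

lemma obj_bound: assumes HD: "HD \<in> carrier_mat NR NT" and HB: "HB \<in> carrier_mat NR (G*L)"
  and HF: "HF \<in> carrier_mat (G*L) NT" and T: "\<forall>k<G. unitary_mat L (T k)"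
  shows "obj HD HB HF (blkdiag G L T) \<le> bnd HD HB HF"
proof -
  let ?Th = "blkdiag G L T"
  have e: "cmod ((HB * ?Th * HF) $$ (i,j)) \<le> (\<Sum>b<G*L. \<Sum>a<G*L. cmod (HB $$ (i,a)) * cmod (HF $$ (b,j)))"
    if i: "i < NR" and j: "j < NT" for i j
  proof -
    have "(HB * ?Th * HF) $$ (i,j) = (\<Sum>b<G*L. (HB * ?Th) $$ (i,b) * HF $$ (b,j))"
      by (rule trans[OF mult_entry]) (use HB HF i j in \<open>auto simp: blkdiag_def\<close>)
    also have "\<dots> = (\<Sum>b<G*L. (\<Sum>a<G*L. HB $$ (i,a) * ?Th $$ (a,b)) * HF $$ (b,j))"
      by (rule sum.cong[OF refl], subst mult_entry) (use HB HF i j in \<open>auto simp: blkdiag_def\<close>)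
    finally have eq: "(HB * ?Th * HF) $$ (i,j) = \<dots>" .
    have "cmod (\<Sum>b<G*L. (\<Sum>a<G*L. HB $$ (i,a) * ?Th $$ (a,b)) * HF $$ (b,j))
       \<le> (\<Sum>b<G*L. cmod ((\<Sum>a<G*L. HB $$ (i,a) * ?Th $$ (a,b)) * HF $$ (b,j)))"
      by (rule norm_sum)
    also have "\<dots> \<le> (\<Sum>b<G*L. \<Sum>a<G*L. cmod (HB $$ (i,a)) * cmod (HF $$ (b,j)))"
    proof (rule sum_mono)
      fix b assume b: "b \<in> {..<G*L}"
      have "cmod ((\<Sum>a<G*L. HB $$ (i,a) * ?Th $$ (a,b)) * HF $$ (b,j))
          = cmod (\<Sum>a<G*L. HB $$ (i,a) * ?Th $$ (a,b)) * cmod (HF $$ (b,j))" by (simp add: norm_mult)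
      also have "\<dots> \<le> (\<Sum>a<G*L. cmod (HB $$ (i,a))) * cmod (HF $$ (b,j))"
      proof (rule mult_right_mono)
        have "cmod (\<Sum>a<G*L. HB $$ (i,a) * ?Th $$ (a,b)) \<le> (\<Sum>a<G*L. cmod (HB $$ (i,a) * ?Th $$ (a,b)))"
          by (rule norm_sum)
        also have "\<dots> \<le> (\<Sum>a<G*L. cmod (HB $$ (i,a)))"
        proof (rule sum_mono)
          fix a assume a: "a \<in> {..<G*L}"
          have "cmod (?Th $$ (a,b)) \<le> 1" using blkdiag_entry[OF T] a b by auto
          thus "cmod (HB $$ (i,a) * ?Th $$ (a,b)) \<le> cmod (HB $$ (i,a))"
            by (simp add: norm_mult mult_left_le)
        qed
        finally show "cmod (\<Sum>a<G*L. HB $$ (i,a) * ?Th $$ (a,b)) \<le> (\<Sum>a<G*L. cmod (HB $$ (i,a)))" .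
      qed simp
      also have "\<dots> = (\<Sum>a<G*L. cmod (HB $$ (i,a)) * cmod (HF $$ (b,j)))" by (simp add: sum_distrib_right)
      finally show "cmod ((\<Sum>a<G*L. HB $$ (i,a) * ?Th $$ (a,b)) * HF $$ (b,j)) \<le> \<dots>" .
    qed
    finally show ?thesis using eq by simp
  qed
  have "obj HD HB HF ?Th = (\<Sum>i<NR. \<Sum>j<NT. (cmod (HD $$ (i,j) + (HB * ?Th * HF) $$ (i,j)))\<^sup>2)"
    unfolding obj_def frob2_def using HD HB HF by simp
  also have "\<dots> \<le> (\<Sum>i<NR. \<Sum>j<NT. (cmod (HD $$ (i,j)) +
     (\<Sum>b<G*L. \<Sum>a<G*L. cmod (HB $$ (i,a)) * cmod (HF $$ (b,j))))\<^sup>2)"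
  proof (intro sum_mono power_mono)
    fix i j assume "i \<in> {..<NR}" "j \<in> {..<NT}"
    thus "cmod (HD $$ (i,j) + (HB * ?Th * HF) $$ (i,j)) \<le> cmod (HD $$ (i,j)) +
      (\<Sum>b<G*L. \<Sum>a<G*L. cmod (HB $$ (i,a)) * cmod (HF $$ (b,j)))"
      using e norm_triangle_ineq[of "HD $$ (i,j)" "(HB * ?Th * HF) $$ (i,j)"] by force
  qed simp
  also have "\<dots> = bnd HD HB HF" using HD HB HF by (simp add: bnd_def)
  finally show ?thesis .
qed

lemma add_split: fixes A B C :: "complex mat" assumes "A \<in> carrier_mat n m" "B \<in> carrier_mat n m" "C \<in> carrier_mat n m"
  shows "A + B = (A + C) + (B - C)"
  using assms by (intro eq_matI) auto

theorem proposition5: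
  fixes NT NR G L :: nat
    and HD HB HF :: "complex mat"
    and Th :: "nat \<Rightarrow> nat \<Rightarrow> complex mat"
    and M :: "nat \<Rightarrow> nat \<Rightarrow> complex mat"
  assumes pos: "NT > 0" "NR > 0" "G > 0" "L > 0"
    and HD: "HD \<in> carrier_mat NR NT"
    and HB: "HB \<in> carrier_mat NR (G * L)"
    and HF: "HF \<in> carrier_mat (G * L) NT"
    and init: "\<forall>g<G. unitary_mat L (Th 0 g)"
    and Mdef: "\<forall>r g. g < G \<longrightarrow>
        M r g = ctrans (col_block L HB g) *
          (HD + HB * blkdiag G L (\<lambda>k. if k < g then Th (Suc r) k else Th r k) * HF) *
          ctrans (row_block L HF g)"
    and upd: "\<forall>r g. g < G \<longrightarrow>
        (\<exists>U S V. is_svd L (M r g) U S V \<and> Th (Suc r) g = U * ctrans V)"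
  shows "incseq (\<lambda>r. obj HD HB HF (blkdiag G L (Th r))) \<and>
         convergent (\<lambda>r. obj HD HB HF (blkdiag G L (Th r))) \<and>
         (\<forall>Mlim Thlim.
            (\<forall>g<G. mat_tendsto (\<lambda>r. M r g) (Mlim g)
                   \<and> mat_tendsto (\<lambda>r. Th r g) (Thlim g)) \<longrightarrow>
            (\<forall>g<G. \<exists>Lam. Lam \<in> carrier_mat L L \<and>
               ctrans (col_block L HB g) * (HD + HB * blkdiag G L Thlim * HF) *
                 ctrans (row_block L HF g) - Thlim g * ctrans Lam = 0\<^sub>m L L))"
proof -
  have dB: "dim_row HB = NR" and dF: "dim_col HF = NT" using HB HF by auto
  have Bc: "col_block L HB g \<in> carrier_mat NR L" for g using col_block_carrier[of L HB g] dB by simp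
  have Fc: "row_block L HF g \<in> carrier_mat L NT" for g using row_block_carrier[of L HF g] dF by simp
  have unit: "\<forall>g<G. unitary_mat L (Th r g)" for r
  proof (induction r)
    case 0 show ?case using init .
  next
    case (Suc r)
    show ?case
    proof (intro allI impI)
      fix g assume g: "g < G"
      from upd g obtain U S V where "is_svd L (M r g) U S V" "Th (Suc r) g = U * ctrans V" by blast
      thus "unitary_mat L (Th (Suc r) g)" using unitary_mult by (auto simp: is_svd_def)
    qed
  qed
  define Phi where "Phi r g = blkdiag G L (\<lambda>k. if k < g then Th (Suc r) k else Th r k)" for r g
  have Phic: "Phi r g \<in> carrier_mat (G*L) (G*L)" for r g by (simp add: Phi_def)
  have stepg: "obj HD HB HF (Phi r g) \<le> obj HD HB HF (Phi r (Suc g))" if g: "g < G" for r g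
  proof -
    from upd g obtain U S V where svd: "is_svd L (M r g) U S V" and X: "Th (Suc r) g = U * ctrans V" by blast
    let ?B = "col_block L HB g" and ?F = "row_block L HF g"
    let ?X = "Th (Suc r) g" and ?Z = "Th r g"
    define P where "P = HD + HB * Phi r g * HF"
    have Pc: "P \<in> carrier_mat NR NT" unfolding P_def using HD HB HF Phic[of r g] by auto
    have Mrg: "M r g = ctrans ?B * P * ctrans ?F" using Mdef g by (simp add: P_def Phi_def)
    have X0u: "unitary_mat L ?Z" using unit g by auto
    have Xu: "unitary_mat L ?X" using unit g by auto
    have X0c: "?Z \<in> carrier_mat L L" and Xc: "?X \<in> carrier_mat L L"
      using X0u Xu by (auto simp: unitary_mat_def)
    have mono: "frob2 P \<le> frob2 (P + ?B * (?X - ?Z) * ?F)"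
      using step_mono[OF Pc Bc Fc X0u svd[unfolded Mrg]] X by simp
    have diff: "Phi r (Suc g) - Phi r g = embed G L g (?X - ?Z)"
    proof -
      let ?T1 = "\<lambda>k. if k < Suc g then Th (Suc r) k else Th r k"
      let ?T2 = "\<lambda>k. if k < g then Th (Suc r) k else Th r k"
      have h1: "\<forall>k. k \<noteq> g \<longrightarrow> ?T1 k = ?T2 k" by auto
      have h2: "?T1 g \<in> carrier_mat L L" using Xc by simp
      have h3: "?T2 g \<in> carrier_mat L L" using X0c by simp
      show ?thesis using blk_step[OF g h1 h2 h3] by (simp add: Phi_def)
    qed
    have "?B * (?X - ?Z) * ?F = HB * embed G L g (?X - ?Z) * HF"
      by (rule embed_mult[OF g _ HB HF, symmetric]) (use Xc X0c in auto)
    also have "\<dots> = HB * (Phi r (Suc g) - Phi r g) * HF" using diff by simp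
    also have "\<dots> = (HB * Phi r (Suc g) - HB * Phi r g) * HF"
      using mult_minus_distrib_mat[OF HB Phic Phic] by simp
    also have "\<dots> = HB * Phi r (Suc g) * HF - HB * Phi r g * HF"
      using minus_mult_distrib_mat[OF mult_carrier_mat[OF HB Phic] mult_carrier_mat[OF HB Phic] HF] by simp
    finally have Q: "?B * (?X - ?Z) * ?F = HB * Phi r (Suc g) * HF - HB * Phi r g * HF" .
    have "HD + HB * Phi r (Suc g) * HF = P + (HB * Phi r (Suc g) * HF - HB * Phi r g * HF)"
      unfolding P_def
      by (rule add_split[OF HD]) (use HB HF Phic in auto)
    hence "obj HD HB HF (Phi r (Suc g)) = frob2 (P + ?B * (?X - ?Z) * ?F)"
      using Q by (simp add: obj_def)
    moreover have "obj HD HB HF (Phi r g) = frob2 P" by (simp add: obj_def P_def)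
    ultimately show ?thesis using mono by simp
  qed
  have chain: "g \<le> G \<Longrightarrow> obj HD HB HF (Phi r 0) \<le> obj HD HB HF (Phi r g)" for r g
  proof (induction g)
    case 0 show ?case by simp
  next
    case (Suc g)
    thus ?case using stepg[of g r] by simp
  qed
  have P0: "Phi r 0 = blkdiag G L (Th r)" for r by (simp add: Phi_def)
  have PG: "Phi r G = blkdiag G L (Th (Suc r))" for r unfolding Phi_def by (rule blkdiag_cong) simp
  have monoR: "obj HD HB HF (blkdiag G L (Th r)) \<le> obj HD HB HF (blkdiag G L (Th (Suc r)))" for r
    using chain[of G r] P0 PG by simp
  have inc: "incseq (\<lambda>r. obj HD HB HF (blkdiag G L (Th r)))"
    by (rule incseq_SucI) (rule monoR)
  have bnd: "\<forall>r. obj HD HB HF (blkdiag G L (Th r)) \<le> bnd HD HB HF"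
    using obj_bound[OF HD HB HF] unit by blast
  obtain lim where "(\<lambda>r. obj HD HB HF (blkdiag G L (Th r))) \<longlonglongrightarrow> lim"
    using incseq_convergent[OF inc bnd] by blast
  hence conv: "convergent (\<lambda>r. obj HD HB HF (blkdiag G L (Th r)))" by (auto simp: convergent_def)
  have part3: "\<exists>Lam. Lam \<in> carrier_mat L L \<and>
               ctrans (col_block L HB g) * (HD + HB * blkdiag G L Thlim * HF) *
                 ctrans (row_block L HF g) - Thlim g * ctrans Lam = 0\<^sub>m L L"
    if lim: "\<forall>g<G. mat_tendsto (\<lambda>r. M r g) (Mlim g) \<and> mat_tendsto (\<lambda>r. Th r g) (Thlim g)"
      and g: "g < G" for Mlim Thlim g
  proof -
    have tl: "mat_tendsto (\<lambda>r. Th r g) (Thlim g)" using lim g by blast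
    have "Th 0 g \<in> carrier_mat L L" using unit g by (auto simp: unitary_mat_def)
    moreover have "Th 0 g \<in> carrier_mat (dim_row (Thlim g)) (dim_col (Thlim g))"
      using tl by (simp add: mat_tendsto_def)
    ultimately have TLc: "Thlim g \<in> carrier_mat L L" by (metis carrier_matD(1) carrier_matD(2) carrier_matI)
    have conv_e: "(\<lambda>r. Th r g $$ (i,j)) \<longlonglongrightarrow> Thlim g $$ (i,j)" if "i < L" "j < L" for i j
      using tl that TLc by (auto simp: mat_tendsto_def)
    have TT: "Thlim g * ctrans (Thlim g) = 1\<^sub>m L"
    proof (rule eq_matI)
      fix i j assume i: "i < dim_row (1\<^sub>m L :: complex mat)" and j: "j < dim_col (1\<^sub>m L :: complex mat)"
      hence i': "i < L" and j': "j < L" by auto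
      have ent: "(A * ctrans A) $$ (i,j) = (\<Sum>k<L. A $$ (i,k) * cnj (A $$ (j,k)))"
        if A: "A \<in> carrier_mat L L" for A
        by (rule trans[OF mult_entry]) (use A i' j' in auto)
      have const: "(\<Sum>k<L. Th r g $$ (i,k) * cnj (Th r g $$ (j,k))) = 1\<^sub>m L $$ (i,j)" for r
      proof -
        have u: "unitary_mat L (Th r g)" using unit g by auto
        have "(\<Sum>k<L. Th r g $$ (i,k) * cnj (Th r g $$ (j,k))) = (Th r g * ctrans (Th r g)) $$ (i,j)"
          using ent[of "Th r g"] u by (simp add: unitary_mat_def)
        also have "\<dots> = 1\<^sub>m L $$ (i,j)" using unitary_right[OF u] by simp
        finally show ?thesis .
      qed
      have "(\<lambda>r. \<Sum>k<L. Th r g $$ (i,k) * cnj (Th r g $$ (j,k))) \<longlonglongrightarrow>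
              (\<Sum>k<L. Thlim g $$ (i,k) * cnj (Thlim g $$ (j,k)))"
        by (intro tendsto_sum tendsto_mult tendsto_cnj conv_e) (use i' j' in auto)
      hence "(\<lambda>r. 1\<^sub>m L $$ (i,j) :: complex) \<longlonglongrightarrow> (\<Sum>k<L. Thlim g $$ (i,k) * cnj (Thlim g $$ (j,k)))"
        using const by simp
      hence "(\<Sum>k<L. Thlim g $$ (i,k) * cnj (Thlim g $$ (j,k))) = 1\<^sub>m L $$ (i,j)"
        using LIMSEQ_unique tendsto_const by blast
      thus "(Thlim g * ctrans (Thlim g)) $$ (i,j) = 1\<^sub>m L $$ (i,j)" using ent[OF TLc] by simp
    qed (use TLc in auto)
    define N where "N = ctrans (col_block L HB g) * (HD + HB * blkdiag G L Thlim * HF) * ctrans (row_block L HF g)"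
    have Nc: "N \<in> carrier_mat L L" unfolding N_def using Bc[of g] Fc[of g] HD HB HF by auto
    define Lam where "Lam = ctrans N * Thlim g"
    have Lc: "Lam \<in> carrier_mat L L" unfolding Lam_def using mult_carrier_mat[OF ctrans_carrier[OF Nc] TLc] .
    have "ctrans Lam = ctrans (Thlim g) * N"
      unfolding Lam_def using ctrans_mult[OF ctrans_carrier[OF Nc] TLc] by simp
    hence "Thlim g * ctrans Lam = (Thlim g * ctrans (Thlim g)) * N"
      using TLc Nc by (simp add: assoc_mult_mat[OF TLc ctrans_carrier[OF TLc] Nc])
    also have "\<dots> = N" using TT Nc by simp
    finally have "N - Thlim g * ctrans Lam = 0\<^sub>m L L" using Nc by simp
    thus ?thesis using Lc unfolding N_def by blast
  qed
  show ?thesis using inc conv part3 by blast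
qed

end
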